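(* For every $n\ge1$, ${\rm gp}_{\rm t}(S_3^n)={\rm gp}_{\rm d}(S_3^n)=3$, and $\#{\rm gp}_{\rm t}(S_3^n)=\#{\rm gp}_{\rm d}(S_3^n)=1$.
   Context: For $p\ge3$, $n\ge1$, the Sierpiński graph $S_p^n$ has vertex set $\{0,1,\dots,p-1\}^n$, a vertex written $i_1\cdots i_n$; vertices $i_1\cdots i_n$ and $j_1\cdots j_n$ are adjacent iff there is $h$ with $i_t=j_t$ for $t<h$, $i_h\ne j_h$, and $i_t=j_h$, $j_t=i_h$ for $t>h$. For $X\subseteq V(G)$, $u,v$ are $X$-positionable if every shortest $u,v$-path $P$ has $V(P)\cap X\subseteq\{u,v\}$. $X$ is a dual general position set if every two vertices of $X$ are $X$-positionable and every two vertices of $V(G)\setminus X$ are $X$-positionable; a total general position set if every two vertices of $G$ are $X$-positionable. ${\rm gp}_{\rm d},{\rm gp}_{\rm t}$ are the maximum sizes and $\#{\rm gp}_{\rm d},\#{\rm gp}_{\rm t}$ the numbers of sets attaining them. *)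

theory Defs
  imports Main
begin

definition is_path :: "'a set \<Rightarrow> ('a \<Rightarrow> 'a \<Rightarrow> bool) \<Rightarrow> 'a \<Rightarrow> 'a \<Rightarrow> 'a list \<Rightarrow> bool" where
  "is_path V adj u v P \<longleftrightarrow> P \<noteq> [] \<and> hd P = u \<and> last P = v \<and> distinct P \<and> set P \<subseteq> V \<and>
     (\<forall>i. Suc i < length P \<longrightarrow> adj (P ! i) (P ! Suc i))"

definition is_shortest_path :: "'a set \<Rightarrow> ('a \<Rightarrow> 'a \<Rightarrow> bool) \<Rightarrow> 'a \<Rightarrow> 'a \<Rightarrow> 'a list \<Rightarrow> bool" where
  "is_shortest_path V adj u v P \<longleftrightarrow> is_path V adj u v P \<and>
     (\<forall>Q. is_path V adj u v Q \<longrightarrow> length P \<le> length Q)"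

definition positionable :: "'a set \<Rightarrow> ('a \<Rightarrow> 'a \<Rightarrow> bool) \<Rightarrow> 'a set \<Rightarrow> 'a \<Rightarrow> 'a \<Rightarrow> bool" where
  "positionable V adj X u v \<longleftrightarrow>
     (\<forall>P. is_shortest_path V adj u v P \<longrightarrow> set P \<inter> X \<subseteq> {u, v})"

definition dual_gp_set :: "'a set \<Rightarrow> ('a \<Rightarrow> 'a \<Rightarrow> bool) \<Rightarrow> 'a set \<Rightarrow> bool" where
  "dual_gp_set V adj X \<longleftrightarrow> X \<subseteq> V \<and>
     (\<forall>u\<in>X. \<forall>v\<in>X. positionable V adj X u v) \<and>
     (\<forall>u\<in>V - X. \<forall>v\<in>V - X. positionable V adj X u v)"

definition total_gp_set :: "'a set \<Rightarrow> ('a \<Rightarrow> 'a \<Rightarrow> bool) \<Rightarrow> 'a set \<Rightarrow> bool" where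
  "total_gp_set V adj X \<longleftrightarrow> X \<subseteq> V \<and> (\<forall>u\<in>V. \<forall>v\<in>V. positionable V adj X u v)"

definition gp_d :: "'a set \<Rightarrow> ('a \<Rightarrow> 'a \<Rightarrow> bool) \<Rightarrow> nat" where
  "gp_d V adj = Max (card ` {X. dual_gp_set V adj X})"

definition gp_t :: "'a set \<Rightarrow> ('a \<Rightarrow> 'a \<Rightarrow> bool) \<Rightarrow> nat" where
  "gp_t V adj = Max (card ` {X. total_gp_set V adj X})"

definition num_gp_d :: "'a set \<Rightarrow> ('a \<Rightarrow> 'a \<Rightarrow> bool) \<Rightarrow> nat" where
  "num_gp_d V adj = card {X. dual_gp_set V adj X \<and> card X = gp_d V adj}"

definition num_gp_t :: "'a set \<Rightarrow> ('a \<Rightarrow> 'a \<Rightarrow> bool) \<Rightarrow> nat" where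
  "num_gp_t V adj = card {X. total_gp_set V adj X \<and> card X = gp_t V adj}"

(* Sierpinski graph S_p^n: vertices are words of length n over {0..<p};
   indices are 0-based here (position h in the paper is position h-1 here). *)

definition sierp_V :: "nat \<Rightarrow> nat \<Rightarrow> nat list set" where
  "sierp_V p n = {xs. length xs = n \<and> set xs \<subseteq> {0..<p}}"

definition sierp_adj :: "nat \<Rightarrow> nat list \<Rightarrow> nat list \<Rightarrow> bool" where
  "sierp_adj n i j \<longleftrightarrow> (\<exists>h<n. (\<forall>t<h. i ! t = j ! t) \<and> i ! h \<noteq> j ! h \<and>
      (\<forall>t. h < t \<and> t < n \<longrightarrow> i ! t = j ! h \<and> j ! t = i ! h))"

end

theory Submission
  imports Defs
begin


lemma path3I:
  assumes "u\<in>V" "x\<in>V" "v\<in>V" "distinct [u,x,v]" "adj u x" "adj x v"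
  shows "is_path V adj u v [u,x,v]"
  using assms unfolding is_path_def
  by (auto simp: less_Suc_eq nth_Cons split: nat.split)

lemma path4I:
  assumes "u\<in>V" "x\<in>V" "y\<in>V" "v\<in>V" "distinct [u,x,y,v]" "adj u x" "adj x y" "adj y v"
  shows "is_path V adj u v [u,x,y,v]"
  using assms unfolding is_path_def
  by (auto simp: less_Suc_eq nth_Cons split: nat.split)

lemma short3:
  assumes p: "is_path V adj u v [u,x,v]" and "u \<noteq> v" "\<not> adj u v"
  shows "is_shortest_path V adj u v [u,x,v]"
  unfolding is_shortest_path_def
proof (intro conjI allI impI)
  show "is_path V adj u v [u,x,v]" by fact
  fix Q assume q: "is_path V adj u v Q"
  show "length [u,x,v] \<le> length Q"
  proof (rule ccontr)
    assume "\<not> ?thesis"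
    then have "length Q < 3" by simp
    moreover have "Q \<noteq> []" using q by (simp add: is_path_def)
    ultimately consider a where "Q = [a]" | a b where "Q = [a,b]"
      by (cases Q; cases "tl Q"; auto)
    then show False
    proof cases
      case 1 then show False using q assms by (auto simp add: is_path_def)
    next
      case 2 then show False using q assms unfolding is_path_def
        by (metis One_nat_def length_Cons lessI list.sel(1) list.size(3) nth_Cons_0 nth_Cons_Suc last_ConsL last_ConsR list.distinct(1))
    qed
  qed
qed

lemma short4:
  assumes p: "is_path V adj u v [u,x,y,v]" and "u \<noteq> v" "\<not> adj u v"
    and nc: "\<forall>w\<in>V. \<not> (adj u w \<and> adj w v)"
  shows "is_shortest_path V adj u v [u,x,y,v]"
  unfolding is_shortest_path_def
proof (intro conjI allI impI)
  show "is_path V adj u v [u,x,y,v]" by fact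
  fix Q assume q: "is_path V adj u v Q"
  show "length [u,x,y,v] \<le> length Q"
  proof (rule ccontr)
    assume "\<not> ?thesis"
    then have "length Q < 4" by simp
    moreover have "Q \<noteq> []" using q by (simp add: is_path_def)
    ultimately consider a where "Q = [a]" | a b where "Q = [a,b]" | a b c where "Q = [a,b,c]"
      by (cases Q; cases "tl Q"; cases "tl (tl Q)"; auto)
    then show False
    proof cases
      case 1 then show False using q assms by (auto simp add: is_path_def)
    next
      case 2
      then have "adj a b" "a = u" "b = v" using q unfolding is_path_def by auto
      then show False using assms by simp
    next
      case 3
      then have "adj a b" "adj b c" "a = u" "c = v" "b \<in> V" using q unfolding is_path_def
        by (auto dest: spec[of _ 0] spec[of _ 1])
      then show False using nc by blast
    qed
  qed
qed



lemma del_nth: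
  assumes "k < length P - 1" "i < length P"
  shows "(take i P @ drop (Suc i) P) ! k = (if k < i then P ! k else P ! Suc k)"
  using assms by (auto simp: nth_append min_def)

lemma not_internal:
  assumes sp: "is_shortest_path V adj u v P"
    and i: "0 < i" "Suc i < length P"
    and cl: "\<And>a b. a \<in> V \<Longrightarrow> b \<in> V \<Longrightarrow> adj a (P!i) \<Longrightarrow> adj (P!i) b \<Longrightarrow> a \<noteq> b \<Longrightarrow> adj a b"
  shows False
proof -
  have p: "is_path V adj u v P" using sp by (simp add: is_shortest_path_def)
  define Q where "Q = take i P @ drop (Suc i) P"
  have lQ: "length Q = length P - 1" using i by (simp add: Q_def)
  have dP: "distinct P" and sP: "set P \<subseteq> V" and hP: "hd P = u" and lP: "last P = v"
    and aP: "\<And>j. Suc j < length P \<Longrightarrow> adj (P!j) (P!Suc j)"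
    using p by (auto simp: is_path_def)
  have "Q \<noteq> []" using lQ i by auto
  moreover have "hd Q = u"
  proof -
    have "P \<noteq> []" using i by (cases P) auto
    then have ne: "take i P \<noteq> []" using i by simp
    have "hd Q = hd (take i P)" unfolding Q_def using ne by (simp only: hd_append if_False)
    also have "\<dots> = hd P" using i by (simp add: hd_take)
    finally show ?thesis using hP by simp
  qed
  moreover have "last Q = v"
  proof -
    have ne: "drop (Suc i) P \<noteq> []" using i by simp
    have "last Q = last (drop (Suc i) P)" unfolding Q_def using ne by (simp only: last_append if_False)
    also have "\<dots> = last P" using i by (simp add: last_drop)
    finally show ?thesis using lP by simp
  qed
  moreover have "distinct Q" unfolding Q_def using dP
    by (simp add: set_take_disj_set_drop_if_distinct)
  moreover have "set Q \<subseteq> V" unfolding Q_def using sP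
    by (auto dest: in_set_takeD in_set_dropD)
  moreover have "\<forall>j. Suc j < length Q \<longrightarrow> adj (Q!j) (Q!Suc j)"
  proof (intro allI impI)
    fix j assume j: "Suc j < length Q"
    have e1: "Q!j = (if j < i then P ! j else P ! Suc j)"
      using j lQ i unfolding Q_def by (intro del_nth) auto
    have e2: "Q!Suc j = (if Suc j < i then P ! Suc j else P ! Suc (Suc j))"
      using j lQ i unfolding Q_def by (intro del_nth) auto
    consider "Suc j < i" | "Suc j = i" | "i \<le> j" by linarith
    then show "adj (Q!j) (Q!Suc j)"
    proof cases
      case 1 then show ?thesis using e1 e2 aP i j lQ by simp
    next
      case 2
      then have "Q!j = P!j" "Q!Suc j = P!Suc i" using e1 e2 by auto
      moreover have "adj (P!j) (P!i)" using aP 2 i by auto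
      moreover have "adj (P!i) (P!Suc i)" using aP i by auto
      moreover have "P!j \<in> V" "P!Suc i \<in> V" using sP i 2 by auto
      moreover have "P!j \<noteq> P!Suc i" using dP i 2 by (simp add: nth_eq_iff_index_eq)
      ultimately show ?thesis using cl by metis
    next
      case 3 then show ?thesis using e1 e2 aP i j lQ by simp
    qed
  qed
  ultimately have "is_path V adj u v Q" by (simp add: is_path_def)
  then have "length P \<le> length Q" using sp by (simp add: is_shortest_path_def)
  then show False using lQ i by simp
qed



lemma adj_sym: "sierp_adj n u v \<Longrightarrow> sierp_adj n v u"
proof -
  assume "sierp_adj n u v"
  then obtain h where h: "h < n" "\<forall>t<h. u!t = v!t" "u!h \<noteq> v!h" "\<forall>t. h < t \<and> t < n \<longrightarrow> u!t = v!h \<and> v!t = u!h"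
    unfolding sierp_adj_def by blast
  have "\<forall>t<h. v!t = u!t" using h(2) by simp
  moreover have "v!h \<noteq> u!h" using h(3) by simp
  moreover have "\<forall>t. h < t \<and> t < n \<longrightarrow> v!t = u!h \<and> u!t = v!h" using h(4) by simp
  ultimately show ?thesis unfolding sierp_adj_def using h(1) by blast
qed

lemma adj_irr: "\<not> sierp_adj n u u"
  by (simp add: sierp_adj_def)

lemma bl_nth: "butlast u = butlast v \<Longrightarrow> length u = n \<Longrightarrow> t < n - 1 \<Longrightarrow> u ! t = v ! t"
  by (metis length_butlast nth_butlast)

lemma bl_eqI: "length u = n \<Longrightarrow> length v = n \<Longrightarrow> (\<And>t. t < n - 1 \<Longrightarrow> u ! t = v ! t) \<Longrightarrow> butlast u = butlast v"
  by (rule nth_equalityI) (auto simp: nth_butlast)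

lemma mate_adj:
  assumes "length u = n" "length v = n" "butlast u = butlast v" "u \<noteq> v"
  shows "sierp_adj n u v"
proof -
  have n: "n \<ge> 1" using assms by (cases n) auto
  have pre: "\<forall>t<n-1. u!t = v!t" using assms bl_nth by blast
  have "u!(n-1) \<noteq> v!(n-1)"
  proof
    assume e: "u!(n-1) = v!(n-1)"
    have "u = v"
    proof (rule nth_equalityI)
      show "length u = length v" using assms by simp
      fix t assume "t < length u"
      then have "t < n - 1 \<or> t = n - 1" using assms by auto
      then show "u!t = v!t" using pre e by auto
    qed
    then show False using assms by simp
  qed
  then show ?thesis unfolding sierp_adj_def using n pre
    by (intro exI[of _ "n-1"]) auto
qed

lemma bridge_dest:
  assumes "sierp_adj n u w" "length u = n" "length w = n" "butlast u \<noteq> butlast w"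
  shows "\<exists>h. h < n - 1 \<and> (\<forall>t<h. u!t = w!t) \<and> u!h \<noteq> w!h \<and> (\<forall>t. h < t \<and> t < n \<longrightarrow> u!t = w!h \<and> w!t = u!h)"
proof -
  obtain h where h: "h < n" "\<forall>t<h. u!t = w!t" "u!h \<noteq> w!h" "\<forall>t. h < t \<and> t < n \<longrightarrow> u!t = w!h \<and> w!t = u!h"
    using assms(1) unfolding sierp_adj_def by blast
  have "h \<noteq> n - 1"
  proof
    assume "h = n - 1"
    then have "butlast u = butlast w" using h assms by (intro bl_eqI[of _ n]) auto
    then show False using assms by simp
  qed
  then show ?thesis using h by (intro exI[of _ h]) auto
qed

lemma bridge_unique:
  assumes a: "sierp_adj n u w" "sierp_adj n u w'" and l: "length u = n" "length w = n" "length w' = n"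
    and b: "butlast u \<noteq> butlast w" "butlast u \<noteq> butlast w'"
  shows "w = w'"
proof -
  obtain h where h: "h < n - 1" "\<forall>t<h. u!t = w!t" "u!h \<noteq> w!h" "\<forall>t. h < t \<and> t < n \<longrightarrow> u!t = w!h \<and> w!t = u!h"
    using bridge_dest[OF a(1) l(1,2) b(1)] by blast
  obtain h' where h': "h' < n - 1" "\<forall>t<h'. u!t = w'!t" "u!h' \<noteq> w'!h'" "\<forall>t. h' < t \<and> t < n \<longrightarrow> u!t = w'!h' \<and> w'!t = u!h'"
    using bridge_dest[OF a(2) l(1,3) b(2)] by blast
  have hh: "h = h'"
  proof (rule ccontr)
    assume "h \<noteq> h'"
    then consider "h < h'" | "h' < h" by linarith
    then show False
    proof cases
      case 1
      have "u!h' = w!h" using h(4) 1 h' by auto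
      moreover have "u!(n-1) = w!h" using h(4) h by auto
      moreover have "u!(n-1) = w'!h'" using h'(4) h' by auto
      ultimately show False using h'(3) by simp
    next
      case 2
      have "u!h = w'!h'" using h'(4) 2 h by auto
      moreover have "u!(n-1) = w'!h'" using h'(4) h' by auto
      moreover have "u!(n-1) = w!h" using h(4) h by auto
      ultimately show False using h(3) by simp
    qed
  qed
  show "w = w'"
  proof (rule nth_equalityI)
    show "length w = length w'" using l by simp
    fix t assume t: "t < length w"
    consider "t < h" | "t = h" | "h < t" by linarith
    then show "w!t = w'!t"
    proof cases
      case 1 then show ?thesis using h(2) h'(2) hh by auto
    next
      case 2
      have "u!(n-1) = w!h" using h(4) h by auto
      moreover have "u!(n-1) = w'!h'" using h'(4) h' by auto
      ultimately show ?thesis using 2 hh by simp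
    next
      case 3 then show ?thesis using h(4) h'(4) hh t l by auto
    qed
  qed
qed

lemma two_bridges:
  assumes a: "sierp_adj n u w" "sierp_adj n u' w'"
    and l: "length u = n" "length w = n" "length u' = n" "length w' = n"
    and e: "butlast u = butlast u'" "butlast w = butlast w'" and b: "butlast u \<noteq> butlast w"
  shows "u = u' \<and> w = w'"
proof -
  have b': "butlast u' \<noteq> butlast w'" using e b by simp
  obtain h where h: "h < n - 1" "\<forall>t<h. u!t = w!t" "u!h \<noteq> w!h" "\<forall>t. h < t \<and> t < n \<longrightarrow> u!t = w!h \<and> w!t = u!h"
    using bridge_dest[OF a(1) l(1,2) b] by blast
  obtain h' where h': "h' < n - 1" "\<forall>t<h'. u'!t = w'!t" "u'!h' \<noteq> w'!h'" "\<forall>t. h' < t \<and> t < n \<longrightarrow> u'!t = w'!h' \<and> w'!t = u'!h'"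
    using bridge_dest[OF a(2) l(3,4) b'] by blast
  have eu: "\<And>t. t < n - 1 \<Longrightarrow> u!t = u'!t" using e(1) l(1) bl_nth by blast
  have ew: "\<And>t. t < n - 1 \<Longrightarrow> w!t = w'!t" using e(2) l(2) bl_nth by blast
  have hh: "h = h'"
  proof (rule ccontr)
    assume "h \<noteq> h'"
    then consider "h < h'" | "h' < h" by linarith
    then show False
    proof cases
      case 1
      then have "u'!h = w'!h" using h'(2) by blast
      moreover have "u!h = u'!h" using eu h(1) by blast
      moreover have "w!h = w'!h" using ew h(1) by blast
      ultimately show False using h(3) by simp
    next
      case 2
      then have "u!h' = w!h'" using h(2) by blast
      moreover have "u!h' = u'!h'" using eu h'(1) by blast
      moreover have "w!h' = w'!h'" using ew h'(1) by blast
      ultimately show False using h'(3) by simp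
    qed
  qed
  have x1: "u!(n-1) = u'!(n-1)"
  proof -
    have "u!(n-1) = w!h" using h(4) h by auto
    moreover have "u'!(n-1) = w'!h'" using h'(4) h' by auto
    moreover have "w!h = w'!h" using ew h(1) by blast
    ultimately show ?thesis using hh by simp
  qed
  have x2: "w!(n-1) = w'!(n-1)"
  proof -
    have "w!(n-1) = u!h" using h(4) h by auto
    moreover have "w'!(n-1) = u'!h'" using h'(4) h' by auto
    moreover have "u!h = u'!h" using eu h(1) by blast
    ultimately show ?thesis using hh by simp
  qed
  have "u = u'"
  proof (rule nth_equalityI)
    show "length u = length u'" using l by simp
    fix t assume "t < length u"
    then have "t < n - 1 \<or> t = n - 1" using l by auto
    then show "u!t = u'!t" using eu x1 by auto
  qed
  moreover have "w = w'"
  proof (rule nth_equalityI)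
    show "length w = length w'" using l by simp
    fix t assume "t < length w"
    then have "t < n - 1 \<or> t = n - 1" using l by auto
    then show "w!t = w'!t" using ew x2 by auto
  qed
  ultimately show ?thesis by simp
qed

lemma const_no_bridge:
  assumes "u = replicate n c" "sierp_adj n u w" "length w = n" "butlast u \<noteq> butlast w"
  shows False
proof -
  obtain h where h: "h < n - 1" "u!h \<noteq> w!h" "\<forall>t. h < t \<and> t < n \<longrightarrow> u!t = w!h \<and> w!t = u!h"
    using bridge_dest[OF assms(2) _ assms(3,4)] assms(1) by auto
  have "u!(n-1) = w!h" using h by auto
  moreover have "u!(n-1) = c" "u!h = c" using assms(1) h by auto
  ultimately show False using h(2) by simp
qed

lemma const_mates:
  assumes "u = replicate n c" "u' = replicate n c'" "butlast u = butlast u'" "n \<ge> 2"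
  shows "u = u'"
proof -
  have "u!0 = u'!0" using bl_nth[OF assms(3), of n 0] assms by simp
  then show ?thesis using assms by simp
qed

lemma mates_exist:
  assumes x: "x \<in> sierp_V 3 n" and n: "n \<ge> 1"
  shows "\<exists>a b. a \<in> sierp_V 3 n \<and> b \<in> sierp_V 3 n \<and> butlast a = butlast x \<and> butlast b = butlast x
      \<and> a \<noteq> x \<and> b \<noteq> x \<and> a \<noteq> b"
proof -
  have lx: "length x = n" "set x \<subseteq> {0..<3}" using x by (auto simp: sierp_V_def)
  have ne: "x \<noteq> []" using lx n by auto
  define l where "l = last x"
  have "last x \<in> set x" using ne by (rule last_in_set)
  then have l3: "l < 3" using lx(2) unfolding l_def by auto
  define a where "a = butlast x @ [(l+1) mod 3]"
  define b where "b = butlast x @ [(l+2) mod 3]"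
  have sb: "set (butlast x) \<subseteq> {0..<3}" using lx(2) in_set_butlastD by fastforce
  have "a \<in> sierp_V 3 n" "b \<in> sierp_V 3 n"
    using lx(1) n sb unfolding a_def b_def sierp_V_def by auto
  moreover have "butlast a = butlast x" "butlast b = butlast x" unfolding a_def b_def by simp_all
  moreover have d: "(l+1) mod 3 \<noteq> l" "(l+2) mod 3 \<noteq> l" "(l+1) mod 3 \<noteq> (l+2) mod 3"
    using l3 by presburger+
  moreover have "a \<noteq> x"
  proof
    assume "a = x" then have "last a = l" unfolding l_def by simp
    then show False using d unfolding a_def by simp
  qed
  moreover have "b \<noteq> x"
  proof
    assume "b = x" then have "last b = l" unfolding l_def by simp
    then show False using d unfolding b_def by simp
  qed
  moreover have "a \<noteq> b" using d unfolding a_def b_def by simp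
  ultimately show ?thesis by blast
qed

lemma nonconst_bridge:
  assumes u: "u \<in> sierp_V 3 n" and nc: "\<forall>c. u \<noteq> replicate n c"
  shows "\<exists>w \<in> sierp_V 3 n. sierp_adj n u w \<and> butlast u \<noteq> butlast w"
proof -
  have lu: "length u = n" "set u \<subseteq> {0..<3}" using u by (auto simp: sierp_V_def)
  have n: "n \<ge> 1" using nc lu by (cases n) auto
  define c where "c = u!(n-1)"
  define I where "I = {i. i < n \<and> u!i \<noteq> c}"
  have fI: "finite I" unfolding I_def by simp
  have neI: "I \<noteq> {}"
  proof
    assume "I = {}"
    then have "u = replicate n c" using lu by (intro nth_equalityI) (auto simp: I_def)
    then show False using nc by simp
  qed
  define h where "h = Max I"
  have hI: "h \<in> I" using fI neI unfolding h_def by simp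
  have hmax: "\<And>i. i \<in> I \<Longrightarrow> i \<le> h" using fI unfolding h_def by simp
  have h1: "h < n" "u!h \<noteq> c" using hI by (auto simp: I_def)
  have h2: "h < n - 1" using h1 unfolding c_def by (cases "h = n - 1") auto
  have h3: "\<And>t. h < t \<Longrightarrow> t < n \<Longrightarrow> u!t = c"
    using hmax unfolding I_def by force
  define w where "w = take h u @ c # replicate (n - 1 - h) (u!h)"
  have lw: "length w = n" using h2 lu unfolding w_def by simp
  have "c \<in> set u" "u!h \<in> set u" using lu h1 n unfolding c_def by auto
  then have "set w \<subseteq> {0..<3}" using lu unfolding w_def by (auto dest: in_set_takeD)
  then have wV: "w \<in> sierp_V 3 n" using lw by (simp add: sierp_V_def)
  have w1: "\<And>t. t < h \<Longrightarrow> w!t = u!t" using h1 lu unfolding w_def by (simp add: nth_append)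
  have w2: "w!h = c" using h1 lu unfolding w_def by (simp add: nth_append)
  have w3: "\<And>t. h < t \<Longrightarrow> t < n \<Longrightarrow> w!t = u!h"
  proof -
    fix t assume "h < t" "t < n"
    then have "w!t = (c # replicate (n - 1 - h) (u!h)) ! (t - h)" using h1 lu unfolding w_def by (simp add: nth_append)
    also have "\<dots> = u!h" using \<open>h < t\<close> \<open>t < n\<close> by (cases "t - h") auto
    finally show "w!t = u!h" .
  qed
  have adj: "sierp_adj n u w" unfolding sierp_adj_def
    using h1 w1 w2 w3 h3 by (intro exI[of _ h]) auto
  have "butlast u \<noteq> butlast w"
  proof
    assume "butlast u = butlast w"
    then have "u!h = w!h" using bl_nth lu h2 by blast
    then show False using w2 h1 by simp
  qed
  then show ?thesis using wV adj by blast
qed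


lemma lenV: "u \<in> sierp_V 3 n \<Longrightarrow> length u = n"
  by (simp add: sierp_V_def)

lemma pos_fail:
  assumes "positionable V adj X u v" "is_shortest_path V adj u v P" "z \<in> set P" "z \<in> X" "z \<noteq> u" "z \<noteq> v"
  shows False
  using assms unfolding positionable_def by blast

lemma P3_dual:
  assumes d: "dual_gp_set V adj X" and x: "x \<in> X" and V: "p \<in> V" "q \<in> V"
    and a: "adj p x" "adj x q" and ne: "p \<noteq> q" "p \<noteq> x" "x \<noteq> q" and na: "\<not> adj p q"
  shows "p \<in> X \<longleftrightarrow> q \<notin> X"
proof -
  have XV: "X \<subseteq> V" using d by (simp add: dual_gp_set_def)
  have sp: "is_shortest_path V adj p q [p,x,q]"
    using XV x V a ne na by (intro short3 path3I) auto
  show ?thesis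
  proof (rule ccontr)
    assume "\<not> ?thesis"
    then have "(p \<in> X \<and> q \<in> X) \<or> (p \<in> V - X \<and> q \<in> V - X)" using V by blast
    then have "positionable V adj X p q" using d unfolding dual_gp_set_def by blast
    then show False using pos_fail sp x ne by (metis list.set_intros(1,2))
  qed
qed

lemma mate_bridge_nadj:
  assumes l: "length m = n" "length x = n" "length y = n" and bm: "butlast m = butlast x" "m \<noteq> x"
    and a: "sierp_adj n x y" and b: "butlast x \<noteq> butlast y"
  shows "\<not> sierp_adj n m y"
proof
  assume "sierp_adj n m y"
  then have "m = x \<and> y = y" using two_bridges[of n m y x y] l bm a b by simp
  then show False using bm by simp
qed

lemma dual_sub:
  assumes d: "dual_gp_set (sierp_V 3 n) (sierp_adj n) X" and xX: "x \<in> X"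
  shows "\<exists>c. x = replicate n c"
proof (rule ccontr)
  let ?V = "sierp_V 3 n" and ?A = "sierp_adj n"
  assume "\<not> ?thesis"
  then have nc: "\<forall>c. x \<noteq> replicate n c" by blast
  have XV: "X \<subseteq> ?V" using d by (simp add: dual_gp_set_def)
  have xV: "x \<in> ?V" using XV xX by blast
  have lx: "length x = n" using xV lenV by blast
  have n2: "n \<ge> 2"
  proof (rule ccontr)
    assume "\<not> n \<ge> 2"
    then have "n = 0 \<or> n = 1" by auto
    then show False
    proof
      assume "n = 0" then show False using nc lx by simp
    next
      assume n1: "n = 1"
      then have "x = replicate n (x!0)" using lx by (intro nth_equalityI) auto
      then show False using nc by blast
    qed
  qed
  obtain y where yV: "y \<in> ?V" and xy: "?A x y" and bxy: "butlast x \<noteq> butlast y"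
    using nonconst_bridge[OF xV nc] by blast
  have ly: "length y = n" using yV lenV by blast
  obtain a b where abV: "a \<in> ?V" "b \<in> ?V" and ab: "butlast a = butlast x" "butlast b = butlast x"
      "a \<noteq> x" "b \<noteq> x" "a \<noteq> b"
    using mates_exist[OF xV] n2 by auto
  have la: "length a = n" "length b = n" using abV lenV by blast+
  have yx: "?A y x" using xy by (rule adj_sym)
  have ay: "a \<noteq> y" using ab bxy by auto
  have xa: "?A x a" using mate_adj[of x n a] lx la ab by simp
  have nay: "\<not> ?A a y" using mate_bridge_nadj[of a n x y] la lx ly ab xy bxy by simp
  have Pa: "a \<in> X \<longleftrightarrow> y \<notin> X"
    using P3_dual[OF d xX abV(1) yV adj_sym[OF xa] xy ay] ab(3) adj_irr[of n x] xy nay by auto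
  show False
  proof (cases "y \<in> X")
    case False
    have caseA: False if a'V: "a' \<in> ?V" and a'X: "a' \<in> X" and ba': "butlast a' = butlast x" and a'x: "a' \<noteq> x"
        and nc': "\<forall>c. a' \<noteq> replicate n c" for a'
    proof -
      have la': "length a' = n" using a'V lenV by blast
      obtain z where zV: "z \<in> ?V" and a'z: "?A a' z" and ba'z: "butlast a' \<noteq> butlast z"
        using nonconst_bridge[OF a'V nc'] by blast
      have lz: "length z = n" using zV lenV by blast
      have xa': "?A x a'" using mate_adj[of x n a'] lx la' ba' a'x by simp
      have nxz: "\<not> ?A x z" using mate_bridge_nadj[of x n a' z] lx la' lz ba' a'x a'z ba'z by simp
      have xz: "x \<noteq> z" using ba' ba'z by auto
      have "x \<in> X \<longleftrightarrow> z \<notin> X"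
        using P3_dual[OF d a'X xV zV xa' a'z xz] a'x nxz adj_irr[of n a'] a'z by metis
      then have zX: "z \<notin> X" using xX by blast
      have yz: "y \<noteq> z"
      proof
        assume "y = z"
        then have "x = a'" using bridge_unique[of n y x a'] yx adj_sym[OF a'z] ly lx la' bxy ba' ba'z by simp
        then show False using a'x by simp
      qed
      have bz: "butlast y \<noteq> butlast z"
      proof
        assume "butlast y = butlast z"
        then have "x = a'" using two_bridges[of n x y a' z] xy a'z lx ly la' lz ba' bxy by simp
        then show False using a'x by simp
      qed
      have nyz: "\<not> ?A y z"
      proof
        assume "?A y z"
        then have "x = z" using bridge_unique[of n y x z] yx ly lx lz bxy bz by simp
        then show False using xz by simp
      qed
      have nc2: "\<forall>w\<in>?V. \<not> (?A y w \<and> ?A w z)"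
      proof (intro ballI notI)
        fix w assume wV: "w \<in> ?V" and "?A y w \<and> ?A w z"
        then have yw: "?A y w" and wz: "?A w z" by auto
        have lw: "length w = n" using wV lenV by blast
        show False
        proof (cases "butlast w = butlast y")
          case False
          then have "w = x" using bridge_unique[of n y x w] yx yw ly lx lw bxy by auto
          then show False using wz nxz by simp
        next
          case True
          then have "butlast z \<noteq> butlast w" using bz by simp
          then have "w = a'" using bridge_unique[of n z w a'] adj_sym[OF wz] adj_sym[OF a'z] lz lw la' ba'z by auto
          then show False using True ba' bxy by simp
        qed
      qed
      have ya': "y \<noteq> a'" using bxy ba' by auto
      have sp: "is_shortest_path ?V ?A y z [y,x,a',z]"
        using yV xV a'V zV yx xa' a'z yz nyz nc2 ya' a'x xz ba'z
        by (intro short4 path4I) (auto simp: adj_irr)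
      have "positionable ?V ?A X y z" using d yV zV False zX unfolding dual_gp_set_def by blast
      then show False using pos_fail[OF _ sp, where z=x] xX yx adj_irr xz by (metis list.set_intros(1,2))
    qed
    have aX: "a \<in> X" using Pa False by simp
    have bX: "b \<in> X"
    proof -
      have by': "b \<noteq> y" using ab bxy by auto
      have xb: "?A x b" using mate_adj[of x n b] lx la ab by simp
      have nby: "\<not> ?A b y" using mate_bridge_nadj[of b n x y] la lx ly ab xy bxy by simp
      have "b \<in> X \<longleftrightarrow> y \<notin> X"
        using P3_dual[OF d xX abV(2) yV adj_sym[OF xb] xy by'] ab(4) adj_irr[of n x] xy nby by auto
      then show ?thesis using False by simp
    qed
    show False
    proof (cases "\<exists>c. a = replicate n c")
      case False
      then show False using caseA[OF abV(1) aX ab(1) ab(3)] by blast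
    next
      case True
      then obtain c where c: "a = replicate n c" by blast
      show False
      proof (cases "\<exists>c. b = replicate n c")
        case False
        then show False using caseA[OF abV(2) bX ab(2) ab(4)] by blast
      next
        case True
        then obtain c' where c': "b = replicate n c'" by blast
        have "a = b" using const_mates[OF c c' _ n2] ab by simp
        then show False using ab by simp
      qed
    qed
  next
    case True
    have aX: "a \<notin> X" using Pa True by simp
    obtain c c2 where cV: "c \<in> ?V" "c2 \<in> ?V" and cc: "butlast c = butlast y" "butlast c2 = butlast y"
        "c \<noteq> y" "c2 \<noteq> y" "c \<noteq> c2"
      using mates_exist[OF yV] n2 by auto
    have lc: "length c = n" using cV lenV by blast
    have yc: "?A y c" using mate_adj[of y n c] ly lc cc by simp
    have xc: "x \<noteq> c" using cc bxy by auto
    have nxc: "\<not> ?A x c"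
    proof
      assume "?A x c"
      then have "adj_c": "?A c x" by (rule adj_sym)
      show False using mate_bridge_nadj[of c n y x] lc ly lx cc yx bxy adj_c by simp
    qed
    have "x \<in> X \<longleftrightarrow> c \<notin> X"
      using P3_dual[OF d True xV cV(1) xy yc xc] adj_irr[of n y] xy nxc by auto
    then have cX: "c \<notin> X" using xX by blast
    have bac: "butlast a \<noteq> butlast c" using ab cc bxy by simp
    have nac: "\<not> ?A a c"
    proof
      assume "?A a c"
      then have "a = x" using two_bridges[of n a c x y] xy la lc lx ly ab cc bac by simp
      then show False using ab by simp
    qed
    have nc2: "\<forall>w\<in>?V. \<not> (?A a w \<and> ?A w c)"
    proof (intro ballI notI)
      fix w assume wV: "w \<in> ?V" and "?A a w \<and> ?A w c"
      then have aw: "?A a w" and wc: "?A w c" by auto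
      have lw: "length w = n" using wV lenV by blast
      show False
      proof (cases "butlast w = butlast a")
        case True
        then have bwc: "butlast w \<noteq> butlast c" using bac by simp
        then have "w = x \<and> c = y" using two_bridges[of n w c x y] wc xy lw lc lx ly True ab cc by simp
        then show False using cc by simp
      next
        case False
        show False
        proof (cases "butlast w = butlast c")
          case True
          then have "a = x" using two_bridges[of n a w x y] aw xy la lw lx ly False ab cc by simp
          then show False using ab by simp
        next
          case False2: False
          have "a = c" using bridge_unique[of n w a c] adj_sym[OF aw] wc lw la lc False False2 by auto
          then show False using bac by simp
        qed
      qed
    qed
    have ac: "a \<noteq> c" using bac by auto
    have sp: "is_shortest_path ?V ?A a c [a,x,y,c]"
      using abV xV yV cV adj_sym[OF xa] xy yc ac nac nc2 ab ay xc cc bxy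
      by (intro short4 path4I) (auto simp: adj_irr)
    have "positionable ?V ?A X a c" using d abV cV aX cX unfolding dual_gp_set_def by blast
    then show False using pos_fail[OF _ sp, where z=x] xX ab xc by (metis list.set_intros(1,2))
  qed
qed

lemma total_sub:
  assumes d: "total_gp_set (sierp_V 3 n) (sierp_adj n) X" and xX: "x \<in> X"
  shows "\<exists>c. x = replicate n c"
proof (rule ccontr)
  let ?V = "sierp_V 3 n" and ?A = "sierp_adj n"
  assume "\<not> ?thesis"
  then have nc: "\<forall>c. x \<noteq> replicate n c" by blast
  have xV: "x \<in> ?V" using d xX by (auto simp: total_gp_set_def)
  have lx: "length x = n" using xV lenV by blast
  have n1: "n \<ge> 1" using nc lx by (cases n) auto
  obtain y where yV: "y \<in> ?V" and xy: "?A x y" and bxy: "butlast x \<noteq> butlast y"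
    using nonconst_bridge[OF xV nc] by blast
  have ly: "length y = n" using yV lenV by blast
  obtain a b where abV: "a \<in> ?V" "b \<in> ?V" and ab: "butlast a = butlast x" "butlast b = butlast x"
      "a \<noteq> x" "b \<noteq> x" "a \<noteq> b"
    using mates_exist[OF xV n1] by auto
  have la: "length a = n" using abV lenV by blast
  have ay: "a \<noteq> y" using ab bxy by auto
  have xa: "?A x a" using mate_adj[of x n a] lx la ab by simp
  have nay: "\<not> ?A a y" using mate_bridge_nadj[of a n x y] la lx ly ab xy bxy by simp
  have sp: "is_shortest_path ?V ?A a y [a,x,y]"
    using abV xV yV adj_sym[OF xa] xy ay nay ab by (intro short3 path3I) (auto simp: adj_irr)
  have "positionable ?V ?A X a y" using d abV yV unfolding total_gp_set_def by blast
  then show False using pos_fail[OF _ sp, where z=x] xX ab adj_irr xy by (metis list.set_intros(1,2))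
qed

definition extremes :: "nat \<Rightarrow> nat list set" where
  "extremes n = (\<lambda>c. replicate n c) ` {0..<3}"

lemma extremes_V: "extremes n \<subseteq> sierp_V 3 n"
  by (auto simp: extremes_def sierp_V_def)

lemma extremes_total: "total_gp_set (sierp_V 3 n) (sierp_adj n) (extremes n)"
  unfolding total_gp_set_def
proof (intro conjI ballI extremes_V)
  let ?V = "sierp_V 3 n" and ?A = "sierp_adj n"
  fix u v assume uV: "u \<in> ?V" and vV: "v \<in> ?V"
  show "positionable ?V ?A (extremes n) u v" unfolding positionable_def
  proof (intro allI impI subsetI)
    fix P z assume sp: "is_shortest_path ?V ?A u v P" and z: "z \<in> set P \<inter> extremes n"
    have p: "is_path ?V ?A u v P" using sp by (simp add: is_shortest_path_def)
    obtain i where i: "i < length P" "z = P!i" using z by (metis IntD1 in_set_conv_nth)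
    obtain c where c: "z = replicate n c" using z by (auto simp: extremes_def)
    have ne: "P \<noteq> []" using p by (simp add: is_path_def)
    show "z \<in> {u, v}"
    proof (cases "i = 0")
      case True
      then have "z = hd P" using i ne by (simp add: hd_conv_nth)
      then show ?thesis using p by (simp add: is_path_def)
    next
      case False
      show ?thesis
      proof (cases "Suc i = length P")
        case True
        then have "i = length P - 1" by simp
        then have "z = last P" using i ne by (simp add: last_conv_nth)
        then show ?thesis using p by (simp add: is_path_def)
      next
        case False2: False
        have "0 < i" using False by simp
        moreover have "Suc i < length P" using i False2 by simp
        ultimately have False
        proof (rule not_internal[OF sp])
          fix a b assume aV: "a \<in> ?V" and bV: "b \<in> ?V" and az: "?A a (P!i)" and zb: "?A (P!i) b" and abn: "a \<noteq> b"
          have la: "length a = n" "length b = n" using aV bV lenV by blast+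
          have "butlast z = butlast a"
          proof (rule ccontr)
            assume "butlast z \<noteq> butlast a"
            then show False using const_no_bridge[OF c, of a] adj_sym[OF az] i la by simp
          qed
          moreover have "butlast z = butlast b"
          proof (rule ccontr)
            assume "butlast z \<noteq> butlast b"
            then show False using const_no_bridge[OF c, of b] zb i la by simp
          qed
          ultimately show "?A a b" using mate_adj[of a n b] la abn by simp
        qed
        then show ?thesis by simp
      qed
    qed
  qed
qed

lemma total_mono: "total_gp_set V adj Y \<Longrightarrow> X \<subseteq> Y \<Longrightarrow> total_gp_set V adj X"
  unfolding total_gp_set_def positionable_def by blast

lemma total_dual: "total_gp_set V adj X \<Longrightarrow> dual_gp_set V adj X"
  unfolding total_gp_set_def dual_gp_set_def by blast

lemma sub_extremes: "(\<exists>c. x = replicate n c) \<Longrightarrow> x \<in> sierp_V 3 n \<Longrightarrow> n \<ge> 1 \<Longrightarrow> x \<in> extremes n"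
proof -
  assume c: "\<exists>c. x = replicate n c" and xV: "x \<in> sierp_V 3 n" and n: "n \<ge> 1"
  then obtain c where c: "x = replicate n c" by blast
  have "c \<in> set x" using c n by simp
  then have "c < 3" using xV by (auto simp: sierp_V_def)
  then show ?thesis using c by (auto simp: extremes_def)
qed

lemma sets_total: "n \<ge> 1 \<Longrightarrow> {X. total_gp_set (sierp_V 3 n) (sierp_adj n) X} = Pow (extremes n)"
proof (intro set_eqI iffI)
  fix X assume n: "n \<ge> 1"
  { assume "X \<in> {X. total_gp_set (sierp_V 3 n) (sierp_adj n) X}"
    then have t: "total_gp_set (sierp_V 3 n) (sierp_adj n) X" by simp
    have "X \<subseteq> extremes n"
    proof
      fix x assume "x \<in> X"
      moreover have "X \<subseteq> sierp_V 3 n" using t by (simp add: total_gp_set_def)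
      ultimately show "x \<in> extremes n" using total_sub[OF t] sub_extremes n by blast
    qed
    then show "X \<in> Pow (extremes n)" by simp }
  { assume "X \<in> Pow (extremes n)"
    then show "X \<in> {X. total_gp_set (sierp_V 3 n) (sierp_adj n) X}"
      using total_mono[OF extremes_total] by simp }
qed

lemma sets_dual: "n \<ge> 1 \<Longrightarrow> {X. dual_gp_set (sierp_V 3 n) (sierp_adj n) X} = Pow (extremes n)"
proof (intro set_eqI iffI)
  fix X assume n: "n \<ge> 1"
  { assume "X \<in> {X. dual_gp_set (sierp_V 3 n) (sierp_adj n) X}"
    then have t: "dual_gp_set (sierp_V 3 n) (sierp_adj n) X" by simp
    have "X \<subseteq> extremes n"
    proof
      fix x assume "x \<in> X"
      moreover have "X \<subseteq> sierp_V 3 n" using t by (simp add: dual_gp_set_def)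
      ultimately show "x \<in> extremes n" using dual_sub[OF t] sub_extremes n by blast
    qed
    then show "X \<in> Pow (extremes n)" by simp }
  { assume "X \<in> Pow (extremes n)"
    then have "total_gp_set (sierp_V 3 n) (sierp_adj n) X" using total_mono[OF extremes_total] by simp
    then show "X \<in> {X. dual_gp_set (sierp_V 3 n) (sierp_adj n) X}" using total_dual by simp }
qed

lemma card_extremes: "n \<ge> 1 \<Longrightarrow> card (extremes n) = 3"
proof -
  assume n: "n \<ge> 1"
  have "inj_on (\<lambda>c. replicate n c) {0..<(3::nat)}" using n by (auto simp: inj_on_def)
  then show ?thesis unfolding extremes_def by (simp add: card_image)
qed

lemma max_pow: "finite E \<Longrightarrow> Max (card ` Pow E) = card E"
  by (rule Max_eqI) (auto intro: card_mono)

lemma count_pow: "finite E \<Longrightarrow> card {X. X \<in> Pow E \<and> card X = card E} = 1"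
proof -
  assume f: "finite E"
  have "{X. X \<in> Pow E \<and> card X = card E} = {E}"
    using f card_subset_eq[OF f] by auto
  then show ?thesis by simp
qed

theorem corollary4p2:
  fixes n :: nat
  assumes "n \<ge> 1"
  shows "gp_t (sierp_V 3 n) (sierp_adj n) = 3 \<and> gp_d (sierp_V 3 n) (sierp_adj n) = 3 \<and>
         num_gp_t (sierp_V 3 n) (sierp_adj n) = 1 \<and> num_gp_d (sierp_V 3 n) (sierp_adj n) = 1"
proof -
  have f: "finite (extremes n)" by (simp add: extremes_def)
  have gt: "gp_t (sierp_V 3 n) (sierp_adj n) = 3"
    unfolding gp_t_def sets_total[OF assms] max_pow[OF f] card_extremes[OF assms] ..
  have gd: "gp_d (sierp_V 3 n) (sierp_adj n) = 3"
    unfolding gp_d_def sets_dual[OF assms] max_pow[OF f] card_extremes[OF assms] ..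
  have "num_gp_t (sierp_V 3 n) (sierp_adj n) = card {X. X \<in> Pow (extremes n) \<and> card X = card (extremes n)}"
    unfolding num_gp_t_def gt card_extremes[OF assms] using sets_total[OF assms] by (metis mem_Collect_eq)
  then have nt: "num_gp_t (sierp_V 3 n) (sierp_adj n) = 1" using count_pow[OF f] by simp
  have "num_gp_d (sierp_V 3 n) (sierp_adj n) = card {X. X \<in> Pow (extremes n) \<and> card X = card (extremes n)}"
    unfolding num_gp_d_def gd card_extremes[OF assms] using sets_dual[OF assms] by (metis mem_Collect_eq)
  then have nd: "num_gp_d (sierp_V 3 n) (sierp_adj n) = 1" using count_pow[OF f] by simp
  show ?thesis using gt gd nt nd by simp
qed

end
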